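(* Let $C_t\subseteq\mathbb{R}^d$ be closed convex sets and $\ell_t$ convex losses with subgradient selections $g_t$, each $\ell_t$ being $L$-Lipschitz. Then the iterates of lazy gradient descent with constant delay $D\ge0$ and learning rate $\eta>0$ satisfy, for every $T\ge1$, $$\Bigg\|\frac1T\sum_{t=1}^Tg_t(\theta_t)\Bigg\|_2\le\frac{\|\tilde\theta_1\|_2+\|\tilde\theta_{T+1}\|_2}{\eta T}+\frac{DL}{T}.$$
   Context: Lazy gradient descent with constant delay $D\ge0$: starting from $\tilde\theta_1$, for $t=1,2,\dots$ set $\theta_t=\Pi_{C_t}(\tilde\theta_t)$ (Euclidean projection) and $\tilde\theta_{t+1}=\tilde\theta_t-\eta g_{t-D}(\theta_{t-D})$, where $g_s(\theta_s):=\mathbf{0}$ for $s\le0$. $\ell$ is $L$-Lipschitz if all its subgradients $g$ satisfy $\|g(\theta)\|_2\le L$ for all $\theta$. *)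

theory Defs
  imports "HOL-Analysis.Analysis"
begin

end

theory Submission
  imports Defs
begin

theorem proposition11:
  fixes C :: "nat \<Rightarrow> 'a::euclidean_space set"
    and loss :: "nat \<Rightarrow> 'a \<Rightarrow> real"
    and g :: "nat \<Rightarrow> 'a \<Rightarrow> 'a"
    and \<theta> \<theta>t :: "nat \<Rightarrow> 'a"
    and L \<eta> :: real and D T :: nat
  assumes sets: "\<forall>t\<ge>1. closed (C t) \<and> convex (C t) \<and> C t \<noteq> {}"
    and cvx: "\<forall>t\<ge>1. convex_on UNIV (loss t)"
    and subgrad: "\<forall>t\<ge>1. \<forall>x y. loss t y \<ge> loss t x + g t x \<bullet> (y - x)"
    and lip: "\<forall>t\<ge>1. \<forall>x. norm (g t x) \<le> L"
    and eta: "\<eta> > 0"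
    and proj: "\<forall>t\<ge>1. \<theta> t = closest_point (C t) (\<theta>t t)"
    and upd: "\<forall>t\<ge>1. \<theta>t (Suc t) = \<theta>t t - \<eta> *\<^sub>R (if t > D then g (t - D) (\<theta> (t - D)) else 0)"
    and T: "T \<ge> 1"
  shows "norm ((1 / real T) *\<^sub>R (\<Sum>t=1..T. g t (\<theta> t)))
           \<le> (norm (\<theta>t 1) + norm (\<theta>t (T + 1))) / (\<eta> * real T) + real D * L / real T"
proof -
  define S where "S n = (\<Sum>s=1..n. g s (\<theta> s))" for n
  have L0: "L \<ge> 0" using lip[rule_format, of 1 "\<theta> 1"] norm_ge_zero[of "g 1 (\<theta> 1)"] by linarith
  have key: "\<theta>t (Suc n) = \<theta>t 1 - \<eta> *\<^sub>R S (n - D)" for n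
  proof (induction n)
    case 0 then show ?case by (simp add: S_def)
  next
    case (Suc n)
    have "S (Suc n - D) = S (n - D) + (if Suc n > D then g (Suc n - D) (\<theta> (Suc n - D)) else 0)"
    proof (cases "Suc n > D")
      case True
      then have "Suc n - D = Suc (n - D)" by simp
      then show ?thesis using True by (simp add: S_def)
    next
      case False
      then show ?thesis by simp
    qed
    moreover have "\<theta>t (Suc (Suc n)) = \<theta>t (Suc n) - \<eta> *\<^sub>R (if Suc n > D then g (Suc n - D) (\<theta> (Suc n - D)) else 0)"
      using upd[rule_format, of "Suc n"] by simp
    ultimately show ?case using Suc.IH by (simp add: algebra_simps)
  qed
  have split: "S T = S (T - D) + (\<Sum>s\<in>{T-D<..T}. g s (\<theta> s))"
  proof -
    have e: "{1..T} = {1..T-D} \<union> {T-D<..T}" by auto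
    show ?thesis unfolding S_def e
      by (rule sum.union_disjoint) auto
  qed
  have tail: "norm (\<Sum>s\<in>{T-D<..T}. g s (\<theta> s)) \<le> real D * L"
  proof -
    have "norm (\<Sum>s\<in>{T-D<..T}. g s (\<theta> s)) \<le> (\<Sum>s\<in>{T-D<..T}. L)"
      by (rule sum_norm_le) (use lip in auto)
    also have "\<dots> = real (T - (T - D)) * L" by simp
    also have "\<dots> \<le> real D * L" using L0 by (intro mult_right_mono) auto
    finally show ?thesis .
  qed
  have h: "S (T - D) = (1/\<eta>) *\<^sub>R (\<theta>t 1 - \<theta>t (T + 1))"
    using key[of T] eta by simp
  have "norm (S (T - D)) \<le> (norm (\<theta>t 1) + norm (\<theta>t (T + 1))) / \<eta>"
    unfolding h using eta norm_triangle_ineq4[of "\<theta>t 1" "\<theta>t (T+1)"]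
    by (simp add: divide_right_mono)
  then have "norm (S T) \<le> (norm (\<theta>t 1) + norm (\<theta>t (T + 1))) / \<eta> + real D * L"
    unfolding split using tail norm_triangle_ineq[of "S (T-D)" "\<Sum>s\<in>{T-D<..T}. g s (\<theta> s)"] by linarith
  then have "norm (S T) / real T \<le> ((norm (\<theta>t 1) + norm (\<theta>t (T + 1))) / \<eta> + real D * L) / real T"
    using T by (simp add: divide_right_mono)
  then show ?thesis using T eta
    by (simp add: S_def add_divide_distrib)
qed

end
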